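(* Suppose a group $G$ is weakly hyperbolic relative to $\{A,B,C_1,\ldots,C_m\}$, where $A$ and $B$ are conjugate subgroups of $G$. Then $G$ is weakly hyperbolic relative to $\{A,C_1,\ldots,C_m\}$.
   Context: For a group $G$ and a collection $\mathcal H=\{H_1,\ldots,H_k\}$ of subgroups, $X\subset G$ is a relative generating set if $G$ is generated by $X\cup H_1\cup\cdots\cup H_k$; the relative Cayley graph is the Cayley graph of $G$ with respect to $X\cup H_1\cup\cdots\cup H_k$ with combinatorial metric; $G$ is weakly hyperbolic relative to $\mathcal H$ if for some finite relative generating set $X$ this relative Cayley graph is hyperbolic. *)

theory Defs
  imports "HOL-Algebra.Algebra"
begin

definition sym_alph :: "('a, 'b) monoid_scheme \<Rightarrow> 'a set \<Rightarrow> 'a set" where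
  "sym_alph G S = S \<union> (\<lambda>s. inv\<^bsub>G\<^esub> s) ` S"

text \<open>Combinatorial (word) metric of the Cayley graph of G w.r.t. S:
  the length of a shortest edge path from g to h, i.e. the least n such that
  inv g \<otimes> h is a product of n letters from S \<union> S^-1.\<close>
definition word_dist :: "('a, 'b) monoid_scheme \<Rightarrow> 'a set \<Rightarrow> 'a \<Rightarrow> 'a \<Rightarrow> nat" where
  "word_dist G S g h =
     (LEAST n. \<exists>ws. length ws = n \<and> set ws \<subseteq> sym_alph G S \<and>
        foldr (\<lambda>x y. x \<otimes>\<^bsub>G\<^esub> y) ws \<one>\<^bsub>G\<^esub> = inv\<^bsub>G\<^esub> g \<otimes>\<^bsub>G\<^esub> h)"

definition gromov_product :: "('p \<Rightarrow> 'p \<Rightarrow> real) \<Rightarrow> 'p \<Rightarrow> 'p \<Rightarrow> 'p \<Rightarrow> real" where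
  "gromov_product d x y w = (d x w + d y w - d x y) / 2"

definition gromov_hyperbolic_on :: "'p set \<Rightarrow> ('p \<Rightarrow> 'p \<Rightarrow> real) \<Rightarrow> bool" where
  "gromov_hyperbolic_on V d \<longleftrightarrow> (\<exists>\<delta>\<ge>0. \<forall>x\<in>V. \<forall>y\<in>V. \<forall>z\<in>V. \<forall>w\<in>V.
      gromov_product d x z w \<ge> min (gromov_product d x y w) (gromov_product d y z w) - \<delta>)"

definition rel_gen_set :: "('a, 'b) monoid_scheme \<Rightarrow> 'a set \<Rightarrow> 'a set list \<Rightarrow> bool" where
  "rel_gen_set M Y Hs \<longleftrightarrow> Y \<subseteq> carrier M \<and>
     generate M (Y \<union> Union (set Hs)) = carrier M"

definition rel_cayley_hyperbolic :: "('a, 'b) monoid_scheme \<Rightarrow> 'a set \<Rightarrow> 'a set list \<Rightarrow> bool" where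
  "rel_cayley_hyperbolic G Y Hs \<longleftrightarrow>
     gromov_hyperbolic_on (carrier G)
       (\<lambda>g h. real (word_dist G (Y \<union> Union (set Hs)) g h))"

definition weakly_rel_hyperbolic :: "('a, 'b) monoid_scheme \<Rightarrow> 'a set list \<Rightarrow> bool" where
  "weakly_rel_hyperbolic G Hs \<longleftrightarrow>
     (\<exists>Y. finite Y \<and> rel_gen_set G Y Hs \<and> rel_cayley_hyperbolic G Y Hs)"

end

theory Submission
  imports Defs
begin


locale gspace =
  fixes V :: "'p set" and d :: "'p \<Rightarrow> 'p \<Rightarrow> nat"
  assumes d_refl: "x \<in> V \<Longrightarrow> d x x = 0"
  and d_eq0: "x \<in> V \<Longrightarrow> y \<in> V \<Longrightarrow> d x y = 0 \<Longrightarrow> x = y"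
  and d_sym: "x \<in> V \<Longrightarrow> y \<in> V \<Longrightarrow> d x y = d y x"
  and d_tri: "x \<in> V \<Longrightarrow> y \<in> V \<Longrightarrow> z \<in> V \<Longrightarrow> d x z \<le> d x y + d y z"
  and d_geo: "x \<in> V \<Longrightarrow> y \<in> V \<Longrightarrow> k \<le> d x y \<Longrightarrow> \<exists>z\<in>V. d x z = k \<and> d z y = d x y - k"
begin

definition btw :: "'p \<Rightarrow> 'p \<Rightarrow> 'p \<Rightarrow> bool" where
  "btw x y p \<longleftrightarrow> d x p + d p y = d x y"

lemma btw_sym: "x \<in> V \<Longrightarrow> y \<in> V \<Longrightarrow> p \<in> V \<Longrightarrow> btw x y p = btw y x p"
  unfolding btw_def using d_sym by (metis add.commute)

lemma btw_left: "x \<in> V \<Longrightarrow> y \<in> V \<Longrightarrow> btw x y x"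
  unfolding btw_def using d_refl by simp

lemma btw_right: "x \<in> V \<Longrightarrow> y \<in> V \<Longrightarrow> btw x y y"
  unfolding btw_def using d_refl by simp

lemma btw_trans1:
  assumes V: "x \<in> V" "y \<in> V" "p \<in> V" "q \<in> V" and "btw x y p" "btw x p q"
  shows "btw x y q \<and> btw q y p"
proof -
  have a: "d x p + d p y = d x y" "d x q + d q p = d x p" using assms unfolding btw_def by auto
  have "d q y \<le> d q p + d p y" using d_tri[of q p y] V by simp
  moreover have "d x y \<le> d x q + d q y" using d_tri[of x q y] V by simp
  ultimately show ?thesis unfolding btw_def using a by linarith
qed

lemma geo_path:
  assumes "x \<in> V" "y \<in> V"
  shows "\<exists>f. f 0 = x \<and> f (d x y) = y \<and> (\<forall>i\<le>d x y. f i \<in> V) \<and> (\<forall>i<d x y. d (f i) (f (Suc i)) \<le> 1)"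
  using assms
proof (induction "d x y" arbitrary: x)
  case 0
  then have "x = y" using d_eq0 by auto
  then show ?case using 0 by (rule_tac x="\<lambda>_. x" in exI) (auto simp: d_refl)
next
  case (Suc n)
  obtain z where z: "z \<in> V" "d x z = 1" "d z y = n" using d_geo[of x y 1] Suc.prems Suc.hyps(2)
    by (metis diff_Suc_1 le_add1 plus_1_eq_Suc)
  obtain f where f: "f 0 = z" "f (d z y) = y" "\<forall>i\<le>d z y. f i \<in> V" "\<forall>i<d z y. d (f i) (f (Suc i)) \<le> 1"
    using Suc.hyps(1)[of z] z Suc.prems by auto
  define g where "g = (\<lambda>i. if i = 0 then x else f (i - 1))"
  show ?case
  proof (rule exI[of _ g], intro conjI allI impI)
    show "g 0 = x" by (simp add: g_def)
    show "g (d x y) = y" using f z Suc.hyps(2)[symmetric] by (simp add: g_def)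
    fix i
    show "i \<le> d x y \<Longrightarrow> g i \<in> V" using f z Suc.hyps(2)[symmetric] Suc.prems by (auto simp: g_def)
    show "i < d x y \<Longrightarrow> d (g i) (g (Suc i)) \<le> 1" using f z Suc.hyps(2)[symmetric]
      by (cases i) (auto simp: g_def)
  qed
qed

lemma tele:
  assumes "\<forall>i<n. d (c i) (c (Suc i)) \<le> L" "\<forall>i\<le>n. c i \<in> V" "i \<le> j" "j \<le> n"
  shows "d (c i) (c j) \<le> L * (j - i)"
  using assms(3,4)
proof (induction j)
  case 0 then show ?case using assms d_refl by auto
next
  case (Suc j)
  show ?case
  proof (cases "i = Suc j")
    case True then show ?thesis using assms d_refl Suc by auto
  next
    case False
    then have "i \<le> j" using Suc by auto
    then have "d (c i) (c j) \<le> L * (j - i)" using Suc by auto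
    moreover have "d (c i) (c (Suc j)) \<le> d (c i) (c j) + d (c j) (c (Suc j))"
      using d_tri[of "c i" "c j" "c (Suc j)"] assms Suc by simp
    moreover have "d (c j) (c (Suc j)) \<le> L" using assms Suc by auto
    ultimately have "d (c i) (c (Suc j)) \<le> L * (j - i) + L" by linarith
    also have "\<dots> = L * (Suc j - i)" using \<open>i \<le> j\<close> by (simp add: Suc_diff_le algebra_simps)
    finally show ?thesis .
  qed
qed

lemma geo_exact:
  assumes "f 0 = x" "f m = y" "m = d x y" "\<forall>i\<le>m. f i \<in> V" "\<forall>i<m. d (f i) (f (Suc i)) \<le> 1"
    "i \<le> j" "j \<le> m"
  shows "d (f i) (f j) = j - i"
proof -
  have le: "\<And>a b. a \<le> b \<Longrightarrow> b \<le> m \<Longrightarrow> d (f a) (f b) \<le> b - a"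
    using tele[of m f 1] assms by auto
  have "d x y \<le> d (f 0) (f i) + d (f i) (f j) + d (f j) (f m)"
  proof -
    have v: "f 0 \<in> V" "f i \<in> V" "f j \<in> V" "f m \<in> V" using assms by auto
    have "d (f 0) (f m) \<le> d (f 0) (f i) + d (f i) (f m)" using d_tri v by simp
    moreover have "d (f i) (f m) \<le> d (f i) (f j) + d (f j) (f m)" using d_tri v by simp
    ultimately show ?thesis using assms by simp
  qed
  moreover have "d (f 0) (f i) \<le> i" using le[of 0 i] assms by auto
  moreover have "d (f j) (f m) \<le> m - j" using le[of j m] assms by auto
  ultimately show ?thesis using le[of i j] assms by linarith
qed

lemma geo_path_btw:
  assumes "f 0 = x" "f m = y" "m = d x y" "\<forall>i\<le>m. f i \<in> V" "\<forall>i<m. d (f i) (f (Suc i)) \<le> 1"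
    "i \<le> m"
  shows "btw x y (f i)"
  using geo_exact[OF assms(1-5), of 0 i] geo_exact[OF assms(1-5), of i m] assms(1,2,3,6)
  unfolding btw_def by auto

end

definition cat :: "nat \<Rightarrow> (nat \<Rightarrow> 'p) \<Rightarrow> (nat \<Rightarrow> 'p) \<Rightarrow> nat \<Rightarrow> 'p" where
  "cat L f g i = (if i \<le> L then f i else g (i - L))"

lemma cat_left: "i \<le> L \<Longrightarrow> cat L f g i = f i" by (simp add: cat_def)
lemma cat_right: "f L = g 0 \<Longrightarrow> cat L f g (L + j) = g j" by (cases j) (auto simp: cat_def)

lemma cat_steps:
  assumes "f L = g 0" "\<forall>i<L. R (f i) (f (Suc i))" "\<forall>i<M. R (g i) (g (Suc i))"
  shows "\<forall>i<L+M. R (cat L f g i) (cat L f g (Suc i))"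
proof (intro allI impI)
  fix i assume i: "i < L + M"
  show "R (cat L f g i) (cat L f g (Suc i))"
  proof (cases "i < L")
    case True then show ?thesis using assms by (simp add: cat_def)
  next
    case False
    then obtain j where j: "i = L + j" "j < M" using i by (metis add_less_imp_less_left le_Suc_ex not_less)
    then show ?thesis using cat_right[where f=f and L=L and g=g, OF assms(1), of j] cat_right[where f=f and L=L and g=g, OF assms(1), of "Suc j"] assms
      by simp
  qed
qed

lemma cat_all:
  assumes "f L = g 0" "\<forall>i\<le>L. P (f i)" "\<forall>i\<le>M. P (g i)"
  shows "\<forall>i\<le>L+M. P (cat L f g i)"
proof (intro allI impI)
  fix i assume i: "i \<le> L + M"
  show "P (cat L f g i)"
  proof (cases "i \<le> L")
    case True then show ?thesis using assms by (simp add: cat_def)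
  next
    case False
    then obtain j where j: "i = L + j" "j \<le> M" using i by (metis le_Suc_ex nat_add_left_cancel_le nat_le_linear)
    then show ?thesis using cat_right[where f=f and L=L and g=g, OF assms(1), of j] assms by simp
  qed
qed

lemma cat_ex:
  assumes "f L = g 0" "i \<le> L + M"
  shows "(\<exists>j\<le>L. cat L f g i = f j) \<or> (\<exists>j\<le>M. cat L f g i = g j)"
  using cat_all[where f=f and L=L and g=g, OF assms(1), of "\<lambda>x. (\<exists>j\<le>L. x = f j) \<or> (\<exists>j\<le>M. x = g j)" M] assms by blast

lemma ivt_nat:
  assumes "P 0" "\<not> P m"
  shows "\<exists>s<m. P s \<and> \<not> P (Suc s)"
  using assms
proof (induction m)
  case 0 then show ?case by simp
next
  case (Suc m) then show ?case by (cases "P m") (auto intro: less_SucI)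
qed

lemma exp_beats_lin: "\<exists>K::nat. \<forall>k. 2 ^ k \<le> a * k + (b::nat) \<longrightarrow> k \<le> K"
proof -
  have sq: "n ^ 2 \<le> (2::nat) ^ n" if "n \<ge> 4" for n
    using that
  proof (induction n rule: nat_induct_at_least)
    case base then show ?case by simp
  next
    case (Suc n)
    have "(Suc n)^2 = n^2 + 2*n + 1" by (simp add: power2_eq_square)
    also have "\<dots> \<le> 2 * n^2"
    proof -
      have "4 * n \<le> n * n" using Suc by (simp add: mult_le_mono1)
      then show ?thesis using Suc.hyps unfolding power2_eq_square by linarith
    qed
    also have "\<dots> \<le> 2 * 2^n" using Suc by simp
    finally show ?case by simp
  qed
  show ?thesis
  proof (rule exI[of _ "max 4 (a + b)"], intro allI impI)
    fix k assume h: "2 ^ k \<le> a * k + b"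
    show "k \<le> max 4 (a + b)"
    proof (rule ccontr)
      assume "\<not> ?thesis"
      then have k: "k \<ge> 4" "k > a + b" by auto
      have "a * k + b \<le> a * k + b * k" using k by simp
      also have "\<dots> = (a + b) * k" by (simp add: algebra_simps)
      also have "\<dots> < k * k" using k by simp
      also have "\<dots> = k ^ 2" by (simp add: power2_eq_square)
      also have "\<dots> \<le> 2 ^ k" using sq k by simp
      finally show False using h by simp
    qed
  qed
qed



locale hspace = gspace +
  fixes \<delta> :: real
  assumes delta_nonneg: "\<delta> \<ge> 0"
  and hyp: "\<And>x y z w. x \<in> V \<Longrightarrow> y \<in> V \<Longrightarrow> z \<in> V \<Longrightarrow> w \<in> V \<Longrightarrow>
     gromov_product (\<lambda>a b. real (d a b)) x z w \<ge>
       min (gromov_product (\<lambda>a b. real (d a b)) x y w) (gromov_product (\<lambda>a b. real (d a b)) y z w) - \<delta>"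
begin

lemma hyp': "x \<in> V \<Longrightarrow> y \<in> V \<Longrightarrow> z \<in> V \<Longrightarrow> w \<in> V \<Longrightarrow>
   (real (d x w) + d z w - d x z) / 2 \<ge> min ((real (d x w) + d y w - d x y) / 2) ((real (d y w) + d z w - d y z) / 2) - \<delta>"
  using hyp[of x y z w] unfolding gromov_product_def by simp

lemma lemT:
  assumes V: "w \<in> V" "x \<in> V" "z \<in> V"
  shows "\<exists>q\<in>V. btw x z q \<and> 2 * real (d w q) \<le> real (d w x) + d w z - d x z + 4 * \<delta> + 1"
proof -
  have t1: "d w z \<le> d w x + d x z" "d x z \<le> d x w + d w z" "d x w \<le> d x z + d z w"
    using d_tri V by blast+
  have sy: "d x w = d w x" "d z w = d w z" "d z x = d x z" using d_sym V by auto
  define t2 where "t2 = d x w + d z x - d w z"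
  define s where "s = t2 div 2"
  have s1: "2 * s \<le> t2" "t2 \<le> 2 * s + 1" unfolding s_def by auto
  have t2le: "t2 \<le> 2 * d x z" unfolding t2_def using t1 sy by linarith
  have sle: "s \<le> d x z" using s1 t2le by linarith
  obtain q where q: "q \<in> V" "d x q = s" "d q z = d x z - s" using d_geo[OF V(2,3) sle] by blast
  have sy2: "d q x = s" "d z q = d x z - s" using q d_sym V by auto
  have "d w z \<le> d x w + d z x" using t1 sy by linarith
  then have rt2: "real t2 = real (d x w) + d z x - d w z" unfolding t2_def by (simp add: of_nat_diff)
  note h1 = hyp'[of w z q x, OF V(1) V(3) q(1) V(2)]
  note h2 = hyp'[of w x q z, OF V(1) V(2) q(1) V(3)]
  have s1r: "2 * real s \<le> real t2" "real t2 \<le> 2 * real s + 1" using s1 by linarith+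
  have rq: "real (d q z) = real (d x z) - real s" "real (d z q) = real (d x z) - real s"
    using q sy2 sle by (simp_all add: of_nat_diff)
  have rq2: "real (d q x) = real s" "real (d x q) = real s" using q sy2 by simp_all
  have e1: "real (d w x) + d q x - d w q \<ge> 2 * s - 2 * \<delta>"
  proof -
    have "min ((real (d w x) + d z x - d w z) / 2) ((real (d z x) + d q x - d z q) / 2) = real s"
      using s1r rt2 sy rq rq2 by (simp add: min_def)
    then show ?thesis using h1 by (simp add: sy)
  qed
  have e2: "real (d w z) + d q z - d w q \<ge> 2 * (real (d x z) - s) - 1 - 2 * \<delta>"
  proof -
    have m: "min ((real (d w z) + d x z - d w x) / 2) ((real (d x z) + d q z - d x q) / 2) \<ge> real (d x z) - s - 1/2"
      using s1r rt2 sy rq rq2 by (simp add: min_def)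
    show ?thesis using h2 m by argo
  qed
  have "2 * real (d w q) \<le> real (d w x) + d w z - d x z + 4 * \<delta> + 1"
    using e1 e2 rq rq2 by (simp add: of_nat_mult)
  moreover have "btw x z q" unfolding btw_def using q sle by simp
  ultimately show ?thesis using q(1) by blast
qed

definition eps0 :: nat where "eps0 = nat \<lceil>3 * \<delta> + 1\<rceil>"

lemma rips:
  assumes V: "x \<in> V" "y \<in> V" "z \<in> V" "p \<in> V" and b: "btw x y p"
  shows "\<exists>q\<in>V. (btw x z q \<or> btw z y q) \<and> d p q \<le> eps0"
proof -
  note h = hyp'[of x z y p, OF V(1) V(3) V(2) V(4)]
  have "d x p + d y p = d x y" using b d_sym V unfolding btw_def by auto
  then have "(real (d x p) + d y p - d x y) / 2 = 0" by simp
  then have "(real (d x p) + d z p - d x z) / 2 \<le> \<delta> \<or> (real (d z p) + d y p - d z y) / 2 \<le> \<delta>"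
    using h V by linarith
  then have "\<exists>q\<in>V. (btw x z q \<or> btw z y q) \<and> real (d p q) \<le> 3 * \<delta> + 1"
  proof
    assume a: "(real (d x p) + d z p - d x z) / 2 \<le> \<delta>"
    obtain q where q: "q \<in> V" "btw x z q" "2 * real (d p q) \<le> real (d p x) + d p z - d x z + 4 * \<delta> + 1"
      using lemT[of p x z] V by blast
    have "d p x = d x p" "d p z = d z p" using d_sym V by auto
    then have "real (d p q) \<le> 3 * \<delta> + 1" using a q by simp
    then show ?thesis using q by blast
  next
    assume a: "(real (d z p) + d y p - d z y) / 2 \<le> \<delta>"
    obtain q where q: "q \<in> V" "btw z y q" "2 * real (d p q) \<le> real (d p z) + d p y - d z y + 4 * \<delta> + 1"
      using lemT[of p z y] V by blast
    have "d p z = d z p" "d p y = d y p" using d_sym V by auto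
    then have "real (d p q) \<le> 3 * \<delta> + 1" using a q by simp
    then show ?thesis using q by blast
  qed
  then obtain q where q: "q \<in> V" "btw x z q \<or> btw z y q" "real (d p q) \<le> 3 * \<delta> + 1" by blast
  have "d p q \<le> eps0" unfolding eps0_def using q(3) by linarith
  then show ?thesis using q by blast
qed

lemma log_lemma:
  "N \<le> 2 ^ k \<Longrightarrow> (\<forall>i<N. d (c (a + i)) (c (a + Suc i)) \<le> lam) \<Longrightarrow> (\<forall>i\<le>N. c (a + i) \<in> V) \<Longrightarrow>
   p \<in> V \<Longrightarrow> btw (c a) (c (a + N)) p \<Longrightarrow> \<exists>i\<le>N. d p (c (a + i)) \<le> k * eps0 + lam"
proof (induction k arbitrary: N a p)
  case 0
  then have N: "N = 0 \<or> N = 1" by auto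
  have ca: "c a \<in> V" using 0 by (metis add_0_right le0)
  show ?case
  proof (cases "N = 0")
    case True
    then have "d (c a) p = 0" using 0 d_refl[OF ca] unfolding btw_def by simp
    then have "d p (c a) = 0" using d_sym 0 ca by simp
    then show ?thesis using True by auto
  next
    case False
    then have N1: "N = 1" using N by simp
    have "d (c a) p \<le> d (c a) (c (a + 1))" using 0 N1 unfolding btw_def by simp
    also have "\<dots> \<le> lam" using 0 N1 by simp
    finally have "d p (c a) \<le> lam" using d_sym 0 ca by simp
    then show ?thesis by (rule_tac x=0 in exI) simp
  qed
next
  case (Suc k)
  define h where "h = N div 2"
  have h1: "h \<le> 2 ^ k" "N - h \<le> 2 ^ k" "h \<le> N" using Suc.prems(1) unfolding h_def by auto
  have ca: "c a \<in> V" "c (a + N) \<in> V" "c (a + h) \<in> V" using Suc.prems h1 by (metis add_0_right le0, simp, simp)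
  obtain q where q: "q \<in> V" "btw (c a) (c (a + h)) q \<or> btw (c (a + h)) (c (a + N)) q" "d p q \<le> eps0"
    using rips[of "c a" "c (a + N)" "c (a + h)" p] ca Suc.prems by blast
  from q(2) show ?case
  proof
    assume b: "btw (c a) (c (a + h)) q"
    obtain i where i: "i \<le> h" "d q (c (a + i)) \<le> k * eps0 + lam"
      using Suc.IH[of h a q] h1 Suc.prems q b by auto
    have "d p (c (a + i)) \<le> d p q + d q (c (a + i))" using d_tri q Suc.prems i h1 by auto
    then show ?thesis using i q h1 by (rule_tac x=i in exI) auto
  next
    assume b: "btw (c (a + h)) (c (a + N)) q"
    have e: "a + h + (N - h) = a + N" using h1 by simp
    obtain i where i: "i \<le> N - h" "d q (c (a + h + i)) \<le> k * eps0 + lam"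
      using Suc.IH[of "N - h" "a + h" q] h1 Suc.prems q b e by (auto simp: add.assoc)
    have "d p (c (a + (h + i))) \<le> d p q + d q (c (a + h + i))" using d_tri q Suc.prems i h1
      by (simp add: add.assoc)
    then show ?thesis using i q h1 by (rule_tac x="h + i" in exI) auto
  qed
qed

end


context gspace begin

lemma geo_facts:
  assumes "x \<in> V" "y \<in> V"
  obtains f where "f 0 = x" "f (d x y) = y" "\<forall>i\<le>d x y. f i \<in> V" "\<forall>i<d x y. d (f i) (f (Suc i)) \<le> 1"
    "\<forall>j\<le>d x y. d x (f j) = j \<and> d (f j) y = d x y - j"
proof -
  obtain f where f: "f 0 = x" "f (d x y) = y" "\<forall>i\<le>d x y. f i \<in> V" "\<forall>i<d x y. d (f i) (f (Suc i)) \<le> 1"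
    using geo_path[OF assms] by blast
  have "\<forall>j\<le>d x y. d x (f j) = j \<and> d (f j) y = d x y - j"
    using geo_exact[OF f(1,2) refl f(3,4), of 0] geo_exact[OF f(1,2) refl f(3,4), of _ "d x y"] f(1,2)
    by auto
  then show ?thesis using f that by blast
qed

end

context hspace begin

definition qgeo :: "nat \<Rightarrow> (nat \<Rightarrow> 'a) \<Rightarrow> nat \<Rightarrow> bool" where
  "qgeo lam c n \<longleftrightarrow> (\<forall>i<n. d (c i) (c (Suc i)) \<le> lam) \<and> (\<forall>i\<le>n. c i \<in> V) \<and>
     (\<forall>i j. i \<le> j \<longrightarrow> j \<le> n \<longrightarrow> j - i \<le> lam * d (c i) (c j))"

lemma morse_core:
  assumes lam: "lam \<ge> 1" and q: "qgeo lam c n" and p0: "p0 \<in> V" "btw (c 0) (c n) p0"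
    and far: "\<forall>i\<le>n. D \<le> d p0 (c i)"
    and near: "\<forall>p\<in>V. btw (c 0) (c n) p \<longrightarrow> (\<exists>i\<le>n. d p (c i) \<le> D)"
  shows "\<exists>k. D \<le> k * eps0 + lam \<and> (k = 0 \<or> 2 ^ k \<le> 2 * (2 + 6 * lam) * D)"
proof -
  define x where "x = c 0"
  define y where "y = c n"
  have cV: "\<And>i. i \<le> n \<Longrightarrow> c i \<in> V" using q unfolding qgeo_def by auto
  have xy: "x \<in> V" "y \<in> V" using cV unfolding x_def y_def by auto
  have bxy: "btw x y p0" using p0 unfolding x_def y_def by simp
  have near': "\<And>p. p \<in> V \<Longrightarrow> btw x y p \<Longrightarrow> \<exists>i\<le>n. d p (c i) \<le> D" using near unfolding x_def y_def by auto
  obtain y' a where ya: "y' \<in> V" "a \<le> n" "btw x p0 y'" "d y' (c a) \<le> D" "2 * D \<le> d p0 y' \<or> y' = c a"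
     "d p0 y' \<le> 2 * D"
  proof (cases "2 * D \<le> d p0 x")
    case True
    obtain y' where y': "y' \<in> V" "d p0 y' = 2 * D" "d y' x = d p0 x - 2 * D" using d_geo[OF p0(1) xy(1) True] by blast
    have "btw x p0 y'" unfolding btw_def using y' d_sym[of x y'] d_sym[of x p0] d_sym[of y' p0] xy p0 True by simp
    then have "btw x y y'" using btw_trans1[of x y p0 y'] bxy xy y' p0 by simp
    then obtain a where "a \<le> n" "d y' (c a) \<le> D" using near' y' by blast
    then show ?thesis using that[of y' a] y' \<open>btw x p0 y'\<close> by simp
  next
    case False
    have "btw x p0 x" using btw_left xy p0 by simp
    moreover have "d x (c 0) \<le> D" using d_refl xy unfolding x_def by simp
    ultimately show ?thesis using that[of x 0] xy False d_sym[of x p0] p0 unfolding x_def by simp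
  qed
  obtain z' b where zb: "z' \<in> V" "b \<le> n" "btw p0 y z'" "d z' (c b) \<le> D" "2 * D \<le> d p0 z' \<or> z' = c b"
     "d p0 z' \<le> 2 * D"
  proof (cases "2 * D \<le> d p0 y")
    case True
    obtain z' where z': "z' \<in> V" "d p0 z' = 2 * D" "d z' y = d p0 y - 2 * D" using d_geo[OF p0(1) xy(2) True] by blast
    have bz: "btw p0 y z'" unfolding btw_def using z' True by simp
    have "btw y x p0" using bxy btw_sym xy p0 by simp
    moreover have "btw y p0 z'" using bz btw_sym xy p0 z' by simp
    ultimately have "btw y x z'" using btw_trans1[of y x p0 z'] xy z' p0 by simp
    then have "btw x y z'" using btw_sym xy z' by simp
    then obtain b where "b \<le> n" "d z' (c b) \<le> D" using near' z' by blast
    then show ?thesis using that[of z' b] z' bz by simp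
  next
    case False
    have "btw p0 y y" using btw_right xy p0 by simp
    moreover have "d y (c n) \<le> D" using d_refl xy unfolding y_def by simp
    ultimately show ?thesis using that[of y n] xy False unfolding y_def by simp
  qed
  have b1: "btw y' y p0" using btw_trans1[of x y p0 y'] bxy ya xy p0 by simp
  have "btw z' y' p0"
    using btw_trans1[of y y' p0 z'] b1 btw_sym[of y' y p0] btw_sym[of p0 y z'] zb ya xy p0 by simp
  then have byz: "btw y' z' p0" using btw_sym ya zb p0 by simp
  have dyz: "d y' z' \<le> 4 * D" using byz ya zb d_sym[of y' p0] p0 unfolding btw_def by simp
  have ca: "c a \<in> V" "c b \<in> V" using cV ya zb by auto
  obtain f1 where f1: "f1 0 = y'" "f1 (d y' (c a)) = c a" "\<forall>i\<le>d y' (c a). f1 i \<in> V"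
      "\<forall>i<d y' (c a). d (f1 i) (f1 (Suc i)) \<le> 1" "\<forall>j\<le>d y' (c a). d y' (f1 j) = j \<and> d (f1 j) (c a) = d y' (c a) - j"
    using geo_facts[OF ya(1) ca(1)] by metis
  obtain f2 where f2: "f2 0 = c b" "f2 (d (c b) z') = z'" "\<forall>i\<le>d (c b) z'. f2 i \<in> V"
      "\<forall>i<d (c b) z'. d (f2 i) (f2 (Suc i)) \<le> 1" "\<forall>j\<le>d (c b) z'. d (c b) (f2 j) = j \<and> d (f2 j) z' = d (c b) z' - j"
    using geo_facts[OF ca(2) zb(1)] by metis
  define L1 where "L1 = d y' (c a)"
  define L2 where "L2 = d (c b) z'"
  define M where "M = (if a \<le> b then b - a else a - b)"
  define s where "s = (\<lambda>i. if a \<le> b then c (a + i) else c (a - i))"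
  define P where "P = cat L1 f1 (cat M s f2)"
  define N where "N = L1 + (M + L2)"
  have s0: "s 0 = c a" and sM: "s M = c b" unfolding s_def M_def by auto
  have sidx: "\<forall>j\<le>M. \<exists>i\<le>n. s j = c i"
  proof (intro allI impI)
    fix j assume j: "j \<le> M"
    show "\<exists>i\<le>n. s j = c i"
    proof (cases "a \<le> b")
      case True
      then show ?thesis using j zb unfolding s_def M_def by (rule_tac x="a + j" in exI) auto
    next
      case False
      then show ?thesis using j ya unfolding s_def M_def by (rule_tac x="a - j" in exI) auto
    qed
  qed
  have sV: "\<forall>j\<le>M. s j \<in> V" using sidx cV by fastforce
  have sstep: "\<forall>i<M. d (s i) (s (Suc i)) \<le> lam"
  proof (intro allI impI)
    fix i assume i: "i < M"
    show "d (s i) (s (Suc i)) \<le> lam"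
    proof (cases "a \<le> b")
      case True
      then show ?thesis using q i zb unfolding s_def M_def qgeo_def by auto
    next
      case False
      then have e: "a - i = Suc (a - Suc i)" using i unfolding M_def by auto
      have "d (c (a - Suc i)) (c (Suc (a - Suc i))) \<le> lam" using q i ya False unfolding M_def qgeo_def by auto
      then have "d (c (a - i)) (c (a - Suc i)) \<le> lam"
        using d_sym[of "c (a - i)" "c (a - Suc i)"] cV ya e by simp
      then show ?thesis using False unfolding s_def by simp
    qed
  qed
  have Ms: "M \<le> lam * d (c a) (c b)"
  proof (cases "a \<le> b")
    case True then show ?thesis using q zb unfolding M_def qgeo_def by auto
  next
    case False
    then have "a - b \<le> lam * d (c b) (c a)" using q ya unfolding qgeo_def by auto
    then show ?thesis using False d_sym ca unfolding M_def by simp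
  qed
  have dab: "d (c a) (c b) \<le> 6 * D"
  proof -
    have "d (c a) (c b) \<le> d (c a) y' + d y' z' + d z' (c b)"
      using d_tri[of "c a" y' z'] d_tri[of "c a" z' "c b"] ca ya zb by simp
    moreover have "d (c a) y' \<le> D" using d_sym ca ya by simp
    ultimately show ?thesis using dyz zb by simp
  qed
  have Nb: "N \<le> (2 + 6 * lam) * D"
  proof -
    have "M \<le> lam * (6 * D)" using Ms dab by (meson le_trans mult_le_mono2)
    moreover have "L1 \<le> D" "L2 \<le> D" using ya zb d_sym ca unfolding L1_def L2_def by auto
    ultimately show ?thesis unfolding N_def by (simp add: algebra_simps)
  qed
  have j1: "f1 L1 = cat M s f2 0" unfolding L1_def using f1 s0 by (simp add: cat_def)
  have j2: "s M = f2 0" using sM f2 by simp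
  have Psteps: "\<forall>i<N. d (P i) (P (Suc i)) \<le> lam"
    unfolding P_def N_def
  proof (rule cat_steps[where f=f1 and L=L1 and g="cat M s f2", OF j1])
    show "\<forall>i<L1. d (f1 i) (f1 (Suc i)) \<le> lam" using f1 lam unfolding L1_def by (meson le_trans)
    show "\<forall>i<M + L2. d (cat M s f2 i) (cat M s f2 (Suc i)) \<le> lam"
      by (rule cat_steps[where f=s and L=M and g=f2, OF j2 sstep]) (use f2 lam in \<open>unfold L2_def; meson le_trans\<close>)
  qed
  have PV: "\<forall>i\<le>N. P i \<in> V"
    unfolding P_def N_def
    by (rule cat_all[where f=f1 and L=L1 and g="cat M s f2", OF j1]) (use f1 in \<open>simp add: L1_def\<close>, rule cat_all[where f=s and L=M and g=f2, OF j2 sV], use f2 in \<open>simp add: L2_def\<close>)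
  have P0: "P 0 = y'" unfolding P_def using f1 by (simp add: cat_def)
  have PN: "P N = z'" unfolding P_def N_def using cat_right[of f1 L1 "cat M s f2", OF j1, of "M + L2"]
      cat_right[of s M f2, OF j2, of L2] f2 L2_def by simp
  have lowb: "D \<le> d p0 (P i)" if i: "i \<le> N" for i
  proof -
    have "(\<exists>j\<le>L1. P i = f1 j) \<or> (\<exists>j\<le>M + L2. P i = cat M s f2 j)"
      using cat_ex[where f=f1 and L=L1 and g="cat M s f2", OF j1, of i "M + L2"] i unfolding P_def N_def by simp
    then show ?thesis
    proof
      assume "\<exists>j\<le>L1. P i = f1 j"
      then obtain j where j: "j \<le> L1" "P i = f1 j" by blast
      have fj: "f1 j \<in> V" using f1 j unfolding L1_def by auto
      have dj: "d y' (f1 j) \<le> D" using f1 j ya unfolding L1_def by auto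
      from ya(5) show ?thesis
      proof
        assume h: "2 * D \<le> d p0 y'"
        have "d p0 y' \<le> d p0 (f1 j) + d (f1 j) y'" using d_tri p0 fj ya by simp
        then show ?thesis using h dj d_sym[of y' "f1 j"] fj ya j by simp
      next
        assume h: "y' = c a"
        then have "L1 = 0" unfolding L1_def using d_refl ya by simp
        then show ?thesis using j f1 h far ya by simp
      qed
    next
      assume "\<exists>j\<le>M + L2. P i = cat M s f2 j"
      then obtain j where j: "j \<le> M + L2" "P i = cat M s f2 j" by blast
      have "(\<exists>j'\<le>M. P i = s j') \<or> (\<exists>j'\<le>L2. P i = f2 j')" using cat_ex[where f=s and L=M and g=f2, OF j2 j(1)] j by simp
      then show ?thesis
      proof
        assume "\<exists>j'\<le>M. P i = s j'"
        then show ?thesis using sidx far by metis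
      next
        assume "\<exists>j'\<le>L2. P i = f2 j'"
        then obtain j' where j': "j' \<le> L2" "P i = f2 j'" by blast
        have fj: "f2 j' \<in> V" using f2 j' unfolding L2_def by auto
        have dj: "d (f2 j') z' \<le> D" using f2 j' zb d_sym ca unfolding L2_def by fastforce
        from zb(5) show ?thesis
        proof
          assume h: "2 * D \<le> d p0 z'"
          have "d p0 z' \<le> d p0 (f2 j') + d (f2 j') z'" using d_tri p0 fj zb by simp
          then show ?thesis using h dj j' by simp
        next
          assume h: "z' = c b"
          then have "L2 = 0" unfolding L2_def using d_refl zb by simp
          then show ?thesis using j' f2 h far zb by simp
        qed
      qed
    qed
  qed
  define k where "k = (LEAST k. N \<le> 2 ^ k)"
  have kex: "N \<le> 2 ^ N" by (simp add: less_imp_le)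
  have k1: "N \<le> 2 ^ k" unfolding k_def by (rule LeastI[of _ N]) (rule kex)
  obtain i where i: "i \<le> N" "d p0 (P (0 + i)) \<le> k * eps0 + lam"
    using log_lemma[of N k P 0 lam p0] k1 Psteps PV p0 byz P0 PN by auto
  have "D \<le> k * eps0 + lam" using lowb[OF i(1)] i by simp
  moreover have "k = 0 \<or> 2 ^ k \<le> 2 * (2 + 6 * lam) * D"
  proof (cases k)
    case 0 then show ?thesis by simp
  next
    case (Suc k')
    then have "\<not> N \<le> 2 ^ k'" using not_less_Least[of k' "\<lambda>k. N \<le> 2 ^ k"] unfolding k_def by simp
    then have "2 ^ k \<le> 2 * N" using Suc by simp
    moreover have "2 * N \<le> 2 * ((2 + 6 * lam) * D)" using Nb by simp
    ultimately have "2 ^ k \<le> 2 * ((2 + 6 * lam) * D)" by linarith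
    then show ?thesis by (simp add: mult.assoc)
  qed
  ultimately show ?thesis by blast
qed

end


context hspace begin

lemma morseA:
  assumes lam: "lam \<ge> 1"
  shows "\<exists>H. \<forall>c n p. qgeo lam c n \<longrightarrow> p \<in> V \<longrightarrow> btw (c 0) (c n) p \<longrightarrow> (\<exists>i\<le>n. d p (c i) \<le> H)"
proof -
  obtain K where K: "\<forall>k. 2 ^ k \<le> (2 * (2 + 6 * lam) * eps0) * k + 2 * (2 + 6 * lam) * lam \<longrightarrow> k \<le> K"
    using exp_beats_lin by blast
  show ?thesis
  proof (rule exI[of _ "K * eps0 + lam"], intro allI impI)
    fix c n p assume q: "qgeo lam c n" and p: "p \<in> V" "btw (c 0) (c n) p"
    have cV: "\<And>i. i \<le> n \<Longrightarrow> c i \<in> V" using q unfolding qgeo_def by auto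
    define Q where "Q = (\<lambda>k. \<exists>p\<in>V. btw (c 0) (c n) p \<and> (\<forall>i\<le>n. k \<le> d p (c i)))"
    have Q0: "Q 0" unfolding Q_def using btw_left[of "c 0" "c n"] cV[of 0] cV[of n] by auto
    have Qb: "\<forall>k. Q k \<longrightarrow> k \<le> d (c 0) (c n)"
    proof (intro allI impI)
      fix k assume "Q k"
      then obtain p' where p': "p' \<in> V" "btw (c 0) (c n) p'" "\<forall>i\<le>n. k \<le> d p' (c i)" unfolding Q_def by blast
      have "k \<le> d p' (c 0)" using p' by simp
      also have "\<dots> = d (c 0) p'" using d_sym cV p' by simp
      also have "\<dots> \<le> d (c 0) (c n)" using p' unfolding btw_def by simp
      finally show "k \<le> d (c 0) (c n)" .
    qed
    define D where "D = (GREATEST k. Q k)"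
    have QD: "Q D" unfolding D_def using GreatestI_nat[of Q 0] Q0 Qb by blast
    have QD1: "\<not> Q (Suc D)"
    proof
      assume "Q (Suc D)"
      then have "Suc D \<le> Greatest Q" using Qb by (intro Greatest_le_nat[of Q "Suc D" "d (c 0) (c n)"]) auto
      then show False unfolding D_def by simp
    qed
    obtain p0 where p0: "p0 \<in> V" "btw (c 0) (c n) p0" "\<forall>i\<le>n. D \<le> d p0 (c i)" using QD unfolding Q_def by blast
    have near: "\<forall>p\<in>V. btw (c 0) (c n) p \<longrightarrow> (\<exists>i\<le>n. d p (c i) \<le> D)"
    proof (intro ballI impI)
      fix p' assume "p' \<in> V" "btw (c 0) (c n) p'"
      then have "\<not> (\<forall>i\<le>n. Suc D \<le> d p' (c i))" using QD1 unfolding Q_def by blast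
      then show "\<exists>i\<le>n. d p' (c i) \<le> D" by (meson not_less_eq_eq)
    qed
    obtain k where k: "D \<le> k * eps0 + lam" "k = 0 \<or> 2 ^ k \<le> 2 * (2 + 6 * lam) * D"
      using morse_core[OF lam q p0 near] by blast
    have "D \<le> K * eps0 + lam"
    proof (cases "k = 0")
      case True then show ?thesis using k by simp
    next
      case False
      then have "2 ^ k \<le> 2 * (2 + 6 * lam) * D" using k by simp
      also have "\<dots> \<le> 2 * (2 + 6 * lam) * (k * eps0 + lam)" using k(1) by (rule mult_le_mono2)
      also have "\<dots> = (2 * (2 + 6 * lam) * eps0) * k + 2 * (2 + 6 * lam) * lam" by (simp add: algebra_simps)
      finally have "k \<le> K" using K by blast
      then show ?thesis using k by (meson add_le_mono1 le_trans mult_le_mono1)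
    qed
    then show "\<exists>i\<le>n. d p (c i) \<le> K * eps0 + lam" using near p by (meson le_trans)
  qed
qed

lemma morseB:
  assumes lam: "lam \<ge> 1"
  shows "\<exists>H'. \<forall>c n i. qgeo lam c n \<longrightarrow> i \<le> n \<longrightarrow> (\<exists>p\<in>V. btw (c 0) (c n) p \<and> d (c i) p \<le> H')"
proof -
  obtain H where H: "\<forall>c n p. qgeo lam c n \<longrightarrow> p \<in> V \<longrightarrow> btw (c 0) (c n) p \<longrightarrow> (\<exists>i\<le>n. d p (c i) \<le> H)"
    using morseA[OF lam] by blast
  show ?thesis
  proof (rule exI[of _ "lam * (lam * (2 * H + 2)) + (H + 1)"], intro allI impI)
    fix c n i0 assume q: "qgeo lam c n" and i0: "i0 \<le> n"
    have cV: "\<And>i. i \<le> n \<Longrightarrow> c i \<in> V" using q unfolding qgeo_def by auto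
    define x where "x = c 0"
    define y where "y = c n"
    have xy: "x \<in> V" "y \<in> V" using cV unfolding x_def y_def by auto
    obtain v where v: "v 0 = x" "v (d x y) = y" "\<forall>i\<le>d x y. v i \<in> V" "\<forall>i<d x y. d (v i) (v (Suc i)) \<le> 1"
        "\<forall>j\<le>d x y. d x (v j) = j \<and> d (v j) y = d x y - j"
      using geo_facts[OF xy] by metis
    have vb: "\<And>s. s \<le> d x y \<Longrightarrow> btw x y (v s)" unfolding btw_def using v by auto
    have cl: "\<exists>w j k. w \<in> V \<and> btw x y w \<and> j \<le> i0 \<and> i0 \<le> k \<and> k \<le> n \<and> d w (c j) \<le> H + 1 \<and> d w (c k) \<le> H + 1"
    proof -
      define Pp where "Pp = (\<lambda>s. \<exists>j\<le>i0. d (v s) (c j) \<le> H)"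
      show ?thesis
      proof (cases "Pp (d x y)")
        case True
        then obtain j where j: "j \<le> i0" "d y (c j) \<le> H" unfolding Pp_def using v by auto
        have "d y (c n) = 0" using d_refl xy unfolding y_def by simp
        moreover have "btw x y y" using btw_right xy by simp
        moreover have "d y (c j) \<le> H + 1" using j by simp
        ultimately show ?thesis using j(1) i0 xy(2) by (metis le0 le_refl add_0 y_def)
      next
        case False
        have "Pp 0" unfolding Pp_def using v d_refl xy unfolding x_def by auto
        then obtain s where s: "s < d x y" "Pp s" "\<not> Pp (Suc s)" using ivt_nat[of Pp "d x y"] False by blast
        obtain j where j: "j \<le> i0" "d (v s) (c j) \<le> H" using s unfolding Pp_def by blast
        have vs: "v (Suc s) \<in> V" "btw (c 0) (c n) (v (Suc s))" using v vb[of "Suc s"] s unfolding x_def y_def by auto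
        obtain k where k: "k \<le> n" "d (v (Suc s)) (c k) \<le> H"
          using H[rule_format, OF q vs] by blast
        have ki: "i0 \<le> k"
        proof (rule ccontr)
          assume "\<not> i0 \<le> k"
          then have "k \<le> i0" by simp
          then have "Pp (Suc s)" unfolding Pp_def using k by blast
          then show False using s by simp
        qed
        have vs2: "v s \<in> V" using v s by simp
        have "d (v s) (c k) \<le> d (v s) (v (Suc s)) + d (v (Suc s)) (c k)"
          using d_tri[OF vs2 vs(1) cV[OF k(1)]] .
        moreover have "d (v s) (v (Suc s)) \<le> 1" using v s by simp
        ultimately have "d (v s) (c k) \<le> H + 1" using k by linarith
        moreover have "btw x y (v s)" using vb[of s] s by simp
        moreover have "d (v s) (c j) \<le> H + 1" using j by simp
        ultimately show ?thesis using j(1) ki k(1) vs2 by blast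
      qed
    qed
    then obtain w j k where w: "w \<in> V" "btw x y w" "j \<le> i0" "i0 \<le> k" "k \<le> n" "d w (c j) \<le> H + 1" "d w (c k) \<le> H + 1"
      by blast
    have cj: "c j \<in> V" "c k \<in> V" "c i0 \<in> V" using cV w i0 by auto
    have "d (c j) (c k) \<le> d (c j) w + d w (c k)" using d_tri cj w by simp
    also have "\<dots> \<le> 2 * H + 2" using w d_sym cj by simp
    finally have djk: "d (c j) (c k) \<le> 2 * H + 2" .
    have "k - j \<le> lam * d (c j) (c k)" using q w unfolding qgeo_def by simp
    also have "\<dots> \<le> lam * (2 * H + 2)" by (rule mult_le_mono2[OF djk])
    finally have kj: "k - j \<le> lam * (2 * H + 2)" .
    have "d (c j) (c i0) \<le> lam * (i0 - j)" using tele[of n c lam j i0] q w i0 cV unfolding qgeo_def by simp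
    also have "\<dots> \<le> lam * (k - j)" using w by (intro mult_le_mono2) simp
    also have "\<dots> \<le> lam * (lam * (2 * H + 2))" using kj by simp
    finally have dji: "d (c j) (c i0) \<le> lam * (lam * (2 * H + 2))" .
    have "d (c i0) w \<le> d (c i0) (c j) + d (c j) w" using d_tri cj w by simp
    then have "d (c i0) w \<le> lam * (lam * (2 * H + 2)) + (H + 1)" using dji w d_sym cj by simp
    then show "\<exists>p\<in>V. btw (c 0) (c n) p \<and> d (c i0) p \<le> lam * (lam * (2 * H + 2)) + (H + 1)"
      using w unfolding x_def y_def by blast
  qed
qed

end


context hspace begin

lemma qi_hyp:
  assumes g2: "gspace V d2" and lam: "lam \<ge> 1"
    and cmp: "\<And>x y. x \<in> V \<Longrightarrow> y \<in> V \<Longrightarrow> d x y \<le> lam * d2 x y \<and> d2 x y \<le> lam * d x y"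
  shows "gromov_hyperbolic_on V (\<lambda>a b. real (d2 a b))"
proof -
  interpret g2: gspace V d2 by (rule g2)
  have qg: "qgeo lam f (d2 x y)" if xy: "x \<in> V" "y \<in> V" and f: "f 0 = x" "f (d2 x y) = y"
    "\<forall>i\<le>d2 x y. f i \<in> V" "\<forall>i<d2 x y. d2 (f i) (f (Suc i)) \<le> 1" for f x y
    unfolding qgeo_def
  proof (intro conjI allI impI)
    fix i assume i: "i < d2 x y"
    have "d (f i) (f (Suc i)) \<le> lam * d2 (f i) (f (Suc i))" using cmp f i by simp
    also have "\<dots> \<le> lam * 1" using f i by (intro mult_le_mono2) simp
    finally show "d (f i) (f (Suc i)) \<le> lam" by simp
  next
    fix i assume "i \<le> d2 x y" then show "f i \<in> V" using f by simp
  next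
    fix i j assume ij: "i \<le> j" "j \<le> d2 x y"
    have "j - i = d2 (f i) (f j)" using g2.geo_exact[OF f(1,2) refl f(3,4) ij] by simp
    also have "\<dots> \<le> lam * d (f i) (f j)" using cmp f ij by simp
    finally show "j - i \<le> lam * d (f i) (f j)" .
  qed
  obtain H where H: "\<forall>c n p. qgeo lam c n \<longrightarrow> p \<in> V \<longrightarrow> btw (c 0) (c n) p \<longrightarrow> (\<exists>i\<le>n. d p (c i) \<le> H)"
    using morseA[OF lam] by blast
  obtain H' where H': "\<forall>c n i. qgeo lam c n \<longrightarrow> i \<le> n \<longrightarrow> (\<exists>p\<in>V. btw (c 0) (c n) p \<and> d (c i) p \<le> H')"
    using morseB[OF lam] by blast
  have closeA: "\<exists>q\<in>V. g2.btw u v q \<and> d s q \<le> H" if uv: "u \<in> V" "v \<in> V" "s \<in> V" "btw u v s" for u v s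
  proof -
    obtain f where f: "f 0 = u" "f (d2 u v) = v" "\<forall>i\<le>d2 u v. f i \<in> V" "\<forall>i<d2 u v. d2 (f i) (f (Suc i)) \<le> 1"
        "\<forall>j\<le>d2 u v. d2 u (f j) = j \<and> d2 (f j) v = d2 u v - j"
      using g2.geo_facts[OF uv(1,2)] by metis
    have q: "qgeo lam f (d2 u v)" using qg[OF uv(1,2) f(1-4)] .
    have bs: "btw (f 0) (f (d2 u v)) s" using uv f by simp
    obtain i where i: "i \<le> d2 u v" "d s (f i) \<le> H" using H[rule_format, OF q uv(3) bs] by blast
    have "g2.btw u v (f i)" unfolding g2.btw_def using f i by simp
    then show ?thesis using i f by blast
  qed
  define eps where "eps = lam * (H' + eps0 + H)"
  have ripsB: "\<exists>q\<in>V. (g2.btw x y q \<or> g2.btw y z q) \<and> d2 p q \<le> eps"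
    if V: "x \<in> V" "y \<in> V" "z \<in> V" "p \<in> V" and b: "g2.btw x z p" for x y z p
  proof -
    obtain f1 where f1: "f1 0 = x" "f1 (d2 x p) = p" "\<forall>i\<le>d2 x p. f1 i \<in> V" "\<forall>i<d2 x p. d2 (f1 i) (f1 (Suc i)) \<le> 1"
      using g2.geo_path[OF V(1) V(4)] by blast
    obtain f2 where f2: "f2 0 = p" "f2 (d2 p z) = z" "\<forall>i\<le>d2 p z. f2 i \<in> V" "\<forall>i<d2 p z. d2 (f2 i) (f2 (Suc i)) \<le> 1"
      using g2.geo_path[OF V(4) V(3)] by blast
    define c where "c = cat (d2 x p) f1 f2"
    have j: "f1 (d2 x p) = f2 0" using f1 f2 by simp
    have n: "d2 x p + d2 p z = d2 x z" using b unfolding g2.btw_def by simp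
    have c0: "c 0 = x" unfolding c_def using f1 by (simp add: cat_def)
    have cn: "c (d2 x z) = z" unfolding c_def using cat_right[where f=f1 and L="d2 x p" and g=f2, OF j, of "d2 p z"] n f2
      by simp
    have cp: "c (d2 x p) = p" unfolding c_def using f1 by (simp add: cat_def)
    have cV: "\<forall>i\<le>d2 x z. c i \<in> V" unfolding c_def using cat_all[where f=f1 and L="d2 x p" and g=f2 and P="\<lambda>a. a \<in> V" and M="d2 p z", OF j f1(3) f2(3)] n
      by simp
    have cs: "\<forall>i<d2 x z. d2 (c i) (c (Suc i)) \<le> 1" unfolding c_def
      using cat_steps[where f=f1 and L="d2 x p" and g=f2 and R="\<lambda>a b. d2 a b \<le> 1" and M="d2 p z", OF j f1(4) f2(4)] n by simp
    have q: "qgeo lam c (d2 x z)" using qg[OF V(1) V(3) c0 cn cV cs] .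
    obtain r where r: "r \<in> V" "btw (c 0) (c (d2 x z)) r" "d (c (d2 x p)) r \<le> H'"
      using H'[rule_format, OF q, of "d2 x p"] n by (metis le_add1)
    have r2: "btw x z r" "d p r \<le> H'" using r c0 cn cp by auto
    obtain s where s: "s \<in> V" "btw x y s \<or> btw y z s" "d r s \<le> eps0"
      using rips[of x z y r] V r r2 by blast
    have dps: "d p s \<le> H' + eps0" using d_tri[of p r s] V r s r2 by simp
    from s(2) obtain q where q: "q \<in> V" "g2.btw x y q \<or> g2.btw y z q" "d s q \<le> H"
      using closeA[of x y s] closeA[of y z s] V s by blast
    have "d p q \<le> d p s + d s q" using d_tri[of p s q] V s q by simp
    then have "d p q \<le> H' + eps0 + H" using dps q by simp
    then have "lam * d p q \<le> eps" unfolding eps_def by (rule mult_le_mono2)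
    moreover have "d2 p q \<le> lam * d p q" using cmp V q by simp
    ultimately show ?thesis using q by (meson le_trans)
  qed
  have insize: "\<exists>p\<in>V. g2.btw x z p \<and> 2 * d2 w p + d2 x z \<le> d2 w x + d2 w z + 4 * eps + 2"
    if V: "w \<in> V" "x \<in> V" "z \<in> V" for w x z
  proof -
    obtain u where u: "u 0 = x" "u (d2 x z) = z" "\<forall>i\<le>d2 x z. u i \<in> V" "\<forall>i<d2 x z. d2 (u i) (u (Suc i)) \<le> 1"
        "\<forall>j\<le>d2 x z. d2 x (u j) = j \<and> d2 (u j) z = d2 x z - j"
      using g2.geo_facts[OF V(2,3)] by metis
    have ub: "\<And>s. s \<le> d2 x z \<Longrightarrow> g2.btw x z (u s)" unfolding g2.btw_def using u by auto
    define Pp where "Pp = (\<lambda>s. \<exists>q\<in>V. g2.btw x w q \<and> d2 (u s) q \<le> eps)"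
    have sw: "d2 w x = d2 x w" "d2 w z = d2 z w" using g2.d_sym V by auto
    show ?thesis
    proof (cases "Pp (d2 x z)")
      case True
      then obtain q where q: "q \<in> V" "g2.btw x w q" "d2 z q \<le> eps" unfolding Pp_def using u by auto
      have t1: "d2 z w \<le> d2 z q + d2 q w" using g2.d_tri q V by simp
      have t2: "d2 x z \<le> d2 x q + d2 q z" using g2.d_tri q V by simp
      have "d2 q z = d2 z q" using g2.d_sym q V by simp
      moreover have "d2 x w = d2 x q + d2 q w" using q unfolding g2.btw_def by simp
      ultimately have "2 * d2 w z + d2 x z \<le> d2 w x + d2 w z + 4 * eps + 2"
        using t1 t2 q(3) sw by linarith
      moreover have "g2.btw x z z" using g2.btw_right V by simp
      ultimately show ?thesis using V by blast
    next
      case False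
      have "Pp 0" unfolding Pp_def using u V g2.btw_left[of x w] g2.d_refl by (intro bexI[of _ x]) auto
      then obtain s where s: "s < d2 x z" "Pp s" "\<not> Pp (Suc s)" using ivt_nat[of Pp "d2 x z"] False by blast
      obtain q1 where q1: "q1 \<in> V" "g2.btw x w q1" "d2 (u s) q1 \<le> eps" using s unfolding Pp_def by blast
      have us: "u s \<in> V" "u (Suc s) \<in> V" using u s by auto
      obtain q2 where q2: "q2 \<in> V" "g2.btw x w q2 \<or> g2.btw w z q2" "d2 (u (Suc s)) q2 \<le> eps"
        using ripsB[of x w z "u (Suc s)"] V us ub[of "Suc s"] s by auto
      have q2b: "g2.btw w z q2" using q2 s unfolding Pp_def by blast
      have "d2 (u s) q2 \<le> d2 (u s) (u (Suc s)) + d2 (u (Suc s)) q2" using g2.d_tri us q2 by simp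
      moreover have "d2 (u s) (u (Suc s)) \<le> 1" using u s by simp
      ultimately have d2q: "d2 (u s) q2 \<le> eps + 1" using q2(3) by linarith
      define p where "p = u s"
      have pb: "g2.btw x z p" using ub[of s] s unfolding p_def by simp
      have e: "d2 x p + d2 p z = d2 x z" using pb unfolding g2.btw_def by simp
      have a1: "d2 x w = d2 x q1 + d2 q1 w" using q1 unfolding g2.btw_def by simp
      have a2: "d2 w z = d2 w q2 + d2 q2 z" using q2b unfolding g2.btw_def by simp
      have t1: "d2 x p \<le> d2 x q1 + d2 q1 p" using g2.d_tri q1 us V unfolding p_def by simp
      have t2: "d2 w p \<le> d2 w q1 + d2 q1 p" using g2.d_tri q1 us V unfolding p_def by simp
      have t3: "d2 w p \<le> d2 w q2 + d2 q2 p" using g2.d_tri q2 us V unfolding p_def by simp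
      have t4: "d2 p z \<le> d2 p q2 + d2 q2 z" using g2.d_tri q2 us V unfolding p_def by simp
      have sy: "d2 q1 p = d2 p q1" "d2 q2 p = d2 p q2" "d2 q1 w = d2 w q1"
        using g2.d_sym q1 q2 us V unfolding p_def by auto
      have pq1: "d2 p q1 \<le> eps" using q1 unfolding p_def by simp
      have pq2: "d2 p q2 \<le> eps + 1" using d2q unfolding p_def by simp
      have s1: "d2 x p + d2 w p \<le> d2 x w + 2 * eps" using a1 t1 t2 sy pq1 by linarith
      have s2: "d2 w p + d2 p z \<le> d2 w z + 2 * eps + 2" using a2 t3 t4 sy pq2 by linarith
      have "2 * d2 w p + d2 x z \<le> d2 w x + d2 w z + 4 * eps + 2" using s1 s2 e sw by linarith
      then show ?thesis using pb us unfolding p_def by blast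
    qed
  qed
  show ?thesis unfolding gromov_hyperbolic_on_def
  proof (rule exI[of _ "3 * real eps + 2"], intro conjI ballI)
    show "0 \<le> 3 * real eps + 2" by simp
    fix x y z w assume V: "x \<in> V" "y \<in> V" "z \<in> V" "w \<in> V"
    obtain p where p: "p \<in> V" "g2.btw x z p" "2 * d2 w p + d2 x z \<le> d2 w x + d2 w z + 4 * eps + 2"
      using insize[of w x z] V by blast
    obtain q where q: "q \<in> V" "g2.btw x y q \<or> g2.btw y z q" "d2 p q \<le> eps" using ripsB[of x y z p] V p by blast
    have wq: "d2 w q \<le> d2 w p + d2 p q" using g2.d_tri V p q by simp
    have sw: "d2 w x = d2 x w" "d2 w z = d2 z w" "d2 w y = d2 y w" using g2.d_sym V by auto
    have key: "real (d2 x w) + d2 y w - d2 x y \<le> 2 * d2 w q \<or> real (d2 y w) + d2 z w - d2 y z \<le> 2 * d2 w q"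
      using q(2)
    proof
      assume b: "g2.btw x y q"
      have "d2 x w \<le> d2 x q + d2 q w" "d2 y w \<le> d2 y q + d2 q w" using g2.d_tri V q by auto
      moreover have "d2 q w = d2 w q" "d2 y q = d2 q y" using g2.d_sym V q by auto
      ultimately have "d2 x w + d2 y w \<le> d2 x y + 2 * d2 w q" using b unfolding g2.btw_def by linarith
      then show ?thesis by linarith
    next
      assume b: "g2.btw y z q"
      have "d2 y w \<le> d2 y q + d2 q w" "d2 z w \<le> d2 z q + d2 q w" using g2.d_tri V q by auto
      moreover have "d2 q w = d2 w q" "d2 z q = d2 q z" using g2.d_sym V q by auto
      ultimately have "d2 y w + d2 z w \<le> d2 y z + 2 * d2 w q" using b unfolding g2.btw_def by linarith
      then show ?thesis by linarith
    qed
    have r1: "real (2 * d2 w p + d2 x z) \<le> real (d2 w x + d2 w z + 4 * eps + 2)" using p(3) by (simp only: of_nat_le_iff)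
    then have r1': "2 * real (d2 w p) + real (d2 x z) \<le> real (d2 x w) + real (d2 z w) + 4 * real eps + 2"
      using sw by simp
    have r2: "real (d2 w q) \<le> real (d2 w p) + real (d2 p q)" using wq by simp
    have r3: "real (d2 p q) \<le> real eps" using q by simp
    have m: "min ((real (d2 x w) + d2 y w - d2 x y) / 2) ((real (d2 y w) + d2 z w - d2 y z) / 2) \<le> real (d2 w q)"
      using key by (auto simp: min_def)
    show "gromov_product (\<lambda>a b. real (d2 a b)) x z w \<ge>
       min (gromov_product (\<lambda>a b. real (d2 a b)) x y w) (gromov_product (\<lambda>a b. real (d2 a b)) y z w) - (3 * real eps + 2)"
      unfolding gromov_product_def using m r1' r2 r3 by argo
  qed
qed

end


context group begin

abbreviation wprod :: "'a list \<Rightarrow> 'a" where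
  "wprod ws \<equiv> foldr (\<lambda>x y. x \<otimes> y) ws \<one>"

lemma wprod_carrier: "set ws \<subseteq> carrier G \<Longrightarrow> wprod ws \<in> carrier G"
  by (induction ws) auto

lemma wprod_append: "set ws \<subseteq> carrier G \<Longrightarrow> set vs \<subseteq> carrier G \<Longrightarrow> wprod (ws @ vs) = wprod ws \<otimes> wprod vs"
  by (induction ws) (auto simp: m_assoc wprod_carrier)

lemma wprod_inv: "set ws \<subseteq> carrier G \<Longrightarrow> wprod (rev (map (\<lambda>x. inv x) ws)) = inv (wprod ws)"
proof (induction ws)
  case Nil then show ?case by simp
next
  case (Cons a ws)
  have "wprod (rev (map (\<lambda>x. inv x) (a # ws))) = wprod (rev (map (\<lambda>x. inv x) ws) @ [inv a])" by simp
  also have "\<dots> = wprod (rev (map (\<lambda>x. inv x) ws)) \<otimes> wprod [inv a]"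
    using Cons.prems by (intro wprod_append) auto
  also have "\<dots> = inv (wprod ws) \<otimes> inv a" using Cons by simp
  also have "\<dots> = inv (a \<otimes> wprod ws)" using Cons.prems wprod_carrier by (simp add: inv_mult_group)
  finally show ?case by simp
qed

lemma sym_alph_carrier: "S \<subseteq> carrier G \<Longrightarrow> sym_alph G S \<subseteq> carrier G"
  unfolding sym_alph_def by auto

lemma sym_alph_inv: "S \<subseteq> carrier G \<Longrightarrow> x \<in> sym_alph G S \<Longrightarrow> inv x \<in> sym_alph G S"
  unfolding sym_alph_def by auto

lemma gen_word:
  assumes SC: "S \<subseteq> carrier G"
  shows "h \<in> generate G S \<Longrightarrow> \<exists>ws. set ws \<subseteq> sym_alph G S \<and> wprod ws = h"
proof (induction h rule: generate.induct)
  case one then show ?case by (rule_tac x="[]" in exI) simp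
next
  case (incl h) then show ?case using SC unfolding sym_alph_def by (rule_tac x="[h]" in exI) auto
next
  case (inv h) then show ?case using SC unfolding sym_alph_def by (rule_tac x="[inv h]" in exI) auto
next
  case (eng h1 h2)
  then obtain w1 w2 where "set w1 \<subseteq> sym_alph G S" "wprod w1 = h1" "set w2 \<subseteq> sym_alph G S" "wprod w2 = h2" by blast
  then show ?case using wprod_append[of w1 w2] sym_alph_carrier[OF SC]
    by (rule_tac x="w1 @ w2" in exI) auto
qed

lemma cancel_mid:
  assumes "x \<in> carrier G" "y \<in> carrier G" "z \<in> carrier G"
  shows "(inv x \<otimes> y) \<otimes> (inv y \<otimes> z) = inv x \<otimes> z"
proof -
  have "(inv x \<otimes> y) \<otimes> (inv y \<otimes> z) = inv x \<otimes> (y \<otimes> (inv y \<otimes> z))" using assms by (simp add: m_assoc)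
  moreover have "y \<otimes> (inv y \<otimes> z) = z" using assms by (simp add: m_assoc[symmetric])
  ultimately show ?thesis by simp
qed

lemma inv_cancel_left': "x \<in> carrier G \<Longrightarrow> t \<in> carrier G \<Longrightarrow> inv x \<otimes> (x \<otimes> t) = t"
  by (simp add: m_assoc[symmetric])

lemma wd_le: "set ws \<subseteq> sym_alph G S \<Longrightarrow> wprod ws = inv g \<otimes> h \<Longrightarrow> word_dist G S g h \<le> length ws"
  unfolding word_dist_def by (rule Least_le) blast

lemma wd_ex:
  assumes "S \<subseteq> carrier G" "generate G S = carrier G" "g \<in> carrier G" "h \<in> carrier G"
  shows "\<exists>ws. length ws = word_dist G S g h \<and> set ws \<subseteq> sym_alph G S \<and> wprod ws = inv g \<otimes> h"
proof -
  obtain ws where "set ws \<subseteq> sym_alph G S" "wprod ws = inv g \<otimes> h"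
    using gen_word[OF assms(1), of "inv g \<otimes> h"] assms by auto
  then have "\<exists>n ws. length ws = n \<and> set ws \<subseteq> sym_alph G S \<and> wprod ws = inv g \<otimes> h" by blast
  then show ?thesis unfolding word_dist_def by (rule LeastI_ex)
qed

lemma wd_shift: "g \<in> carrier G \<Longrightarrow> h \<in> carrier G \<Longrightarrow> word_dist G S g h = word_dist G S \<one> (inv g \<otimes> h)"
  unfolding word_dist_def by simp

lemma wd_gspace:
  assumes S: "S \<subseteq> carrier G" "generate G S = carrier G"
  shows "gspace (carrier G) (word_dist G S)"
proof
  fix x assume x: "x \<in> carrier G"
  show "word_dist G S x x = 0" using wd_le[of "[]" S x x] x by simp
next
  fix x y assume xy: "x \<in> carrier G" "y \<in> carrier G" "word_dist G S x y = 0"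
  then obtain ws where "length ws = 0" "wprod ws = inv x \<otimes> y" using wd_ex[OF S, of x y] by auto
  then have "\<one> = inv x \<otimes> y" by simp
  moreover have "y = x \<otimes> (inv x \<otimes> y)" using xy by (simp add: m_assoc[symmetric])
  ultimately show "x = y" using xy by (metis r_one)
next
  have le: "word_dist G S y x \<le> word_dist G S x y" if xy: "x \<in> carrier G" "y \<in> carrier G" for x y
  proof -
    obtain ws where ws: "length ws = word_dist G S x y" "set ws \<subseteq> sym_alph G S" "wprod ws = inv x \<otimes> y"
      using wd_ex[OF S xy] by blast
    have c: "set ws \<subseteq> carrier G" using ws sym_alph_carrier[OF S(1)] by auto
    have "set (rev (map (\<lambda>x. inv x) ws)) \<subseteq> sym_alph G S" using ws sym_alph_inv[OF S(1)] by auto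
    moreover have "wprod (rev (map (\<lambda>x. inv x) ws)) = inv y \<otimes> x" using wprod_inv[OF c] ws xy
      by (simp add: inv_mult_group)
    ultimately show ?thesis using wd_le[of "rev (map (\<lambda>x. inv x) ws)" S y x] ws by simp
  qed
  fix x y assume "x \<in> carrier G" "y \<in> carrier G"
  then show "word_dist G S x y = word_dist G S y x" using le by (simp add: le_antisym)
next
  have tri: "word_dist G S x z \<le> word_dist G S x y + word_dist G S y z"
    if xyz: "x \<in> carrier G" "y \<in> carrier G" "z \<in> carrier G" for x y z
  proof -
    obtain w1 where w1: "length w1 = word_dist G S x y" "set w1 \<subseteq> sym_alph G S" "wprod w1 = inv x \<otimes> y"
      using wd_ex[OF S, of x y] xyz by blast
    obtain w2 where w2: "length w2 = word_dist G S y z" "set w2 \<subseteq> sym_alph G S" "wprod w2 = inv y \<otimes> z"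
      using wd_ex[OF S, of y z] xyz by blast
    have c: "set w1 \<subseteq> carrier G" "set w2 \<subseteq> carrier G" using w1 w2 sym_alph_carrier[OF S(1)] by auto
    have "wprod (w1 @ w2) = (inv x \<otimes> y) \<otimes> (inv y \<otimes> z)" using wprod_append[OF c] w1 w2 by simp
    also have "\<dots> = inv x \<otimes> z" using xyz by (rule cancel_mid)
    finally have "word_dist G S x z \<le> length (w1 @ w2)" using w1 w2 by (intro wd_le) auto
    then show ?thesis using w1 w2 by simp
  qed
  fix x y z assume "x \<in> carrier G" "y \<in> carrier G" "z \<in> carrier G"
  then show "word_dist G S x z \<le> word_dist G S x y + word_dist G S y z" using tri by blast
next
  fix x y k assume xy: "x \<in> carrier G" "y \<in> carrier G" and k: "k \<le> word_dist G S x y"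
  obtain ws where ws: "length ws = word_dist G S x y" "set ws \<subseteq> sym_alph G S" "wprod ws = inv x \<otimes> y"
    using wd_ex[OF S xy] by blast
  have st: "set (take k ws) \<subseteq> sym_alph G S" "set (drop k ws) \<subseteq> sym_alph G S"
    using ws(2) by (meson set_take_subset subset_trans, meson set_drop_subset subset_trans)
  have ct: "set (take k ws) \<subseteq> carrier G" "set (drop k ws) \<subseteq> carrier G"
    using st sym_alph_carrier[OF S(1)] by (meson subset_trans)+
  define t where "t = wprod (take k ws)"
  define r where "r = wprod (drop k ws)"
  have pc: "t \<in> carrier G" "r \<in> carrier G" unfolding t_def r_def using wprod_carrier ct by auto
  define z where "z = x \<otimes> t"
  have zc: "z \<in> carrier G" unfolding z_def using xy pc by simp
  have split: "inv x \<otimes> y = t \<otimes> r"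
  proof -
    have "wprod (take k ws @ drop k ws) = t \<otimes> r" unfolding t_def r_def by (rule wprod_append[OF ct])
    then show ?thesis using ws(3) by simp
  qed
  have e1: "t = inv x \<otimes> z" unfolding z_def using xy pc by (simp add: inv_cancel_left')
  have e2: "r = inv z \<otimes> y"
  proof -
    have "inv z = inv t \<otimes> inv x" unfolding z_def using xy pc by (simp add: inv_mult_group)
    then have "inv z \<otimes> y = inv t \<otimes> (inv x \<otimes> y)" using xy pc by (simp add: m_assoc)
    also have "\<dots> = inv t \<otimes> (t \<otimes> r)" using split by simp
    also have "\<dots> = r" using pc by (simp add: m_assoc[symmetric])
    finally show ?thesis by simp
  qed
  have d1: "word_dist G S x z \<le> k" using wd_le[OF st(1), of x z] e1 ws k unfolding t_def by simp
  have d2: "word_dist G S z y \<le> word_dist G S x y - k" using wd_le[OF st(2), of z y] e2 ws unfolding r_def by simp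
  have "word_dist G S x y \<le> word_dist G S x z + word_dist G S z y"
  proof -
    obtain w1 where w1: "length w1 = word_dist G S x z" "set w1 \<subseteq> sym_alph G S" "wprod w1 = inv x \<otimes> z"
      using wd_ex[OF S xy(1) zc] by blast
    obtain w2 where w2: "length w2 = word_dist G S z y" "set w2 \<subseteq> sym_alph G S" "wprod w2 = inv z \<otimes> y"
      using wd_ex[OF S zc xy(2)] by blast
    have c: "set w1 \<subseteq> carrier G" "set w2 \<subseteq> carrier G" using w1 w2 sym_alph_carrier[OF S(1)] by auto
    have "wprod (w1 @ w2) = (inv x \<otimes> z) \<otimes> (inv z \<otimes> y)" using wprod_append[OF c] w1 w2 by simp
    also have "\<dots> = inv x \<otimes> y" using xy zc by (intro cancel_mid)
    finally have "word_dist G S x y \<le> length (w1 @ w2)" using w1 w2 by (intro wd_le) auto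
    then show ?thesis using w1 w2 by simp
  qed
  then have "word_dist G S x z = k \<and> word_dist G S z y = word_dist G S x y - k" using d1 d2 k by linarith
  then show "\<exists>z\<in>carrier G. word_dist G S x z = k \<and> word_dist G S z y = word_dist G S x y - k"
    using zc by blast
qed

lemma wd_compare:
  assumes S1: "S1 \<subseteq> carrier G" "generate G S1 = carrier G"
    and S2: "S2 \<subseteq> carrier G" "generate G S2 = carrier G"
    and L: "\<forall>s\<in>S1. word_dist G S2 \<one> s \<le> L"
    and gh: "g \<in> carrier G" "h \<in> carrier G"
  shows "word_dist G S2 g h \<le> L * word_dist G S1 g h"
proof -
  interpret g2: gspace "carrier G" "word_dist G S2" by (rule wd_gspace[OF S2])
  have La: "word_dist G S2 \<one> a \<le> L" if a: "a \<in> sym_alph G S1" for a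
  proof (cases "a \<in> S1")
    case True then show ?thesis using L by blast
  next
    case False
    then obtain s where s: "s \<in> S1" "a = inv s" using a unfolding sym_alph_def by blast
    have sc: "s \<in> carrier G" using s S1 by auto
    have "word_dist G S2 \<one> a = word_dist G S2 s \<one>" using wd_shift[of s \<one> S2] sc s by simp
    also have "\<dots> = word_dist G S2 \<one> s" using g2.d_sym sc by simp
    finally show ?thesis using L s by simp
  qed
  have key: "set ws \<subseteq> sym_alph G S1 \<Longrightarrow> word_dist G S2 \<one> (wprod ws) \<le> L * length ws" for ws
  proof (induction ws)
    case Nil then show ?case using g2.d_refl by simp
  next
    case (Cons a ws)
    have ac: "a \<in> carrier G" "set ws \<subseteq> carrier G" using Cons.prems sym_alph_carrier[OF S1(1)] by auto
    have pc: "wprod ws \<in> carrier G" using wprod_carrier ac by simp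
    have t: "word_dist G S2 \<one> (a \<otimes> wprod ws) \<le> word_dist G S2 \<one> a + word_dist G S2 a (a \<otimes> wprod ws)"
      using g2.d_tri ac pc by simp
    have "word_dist G S2 a (a \<otimes> wprod ws) = word_dist G S2 \<one> (inv a \<otimes> (a \<otimes> wprod ws))"
      using wd_shift[of a "a \<otimes> wprod ws" S2] ac pc by simp
    also have "\<dots> = word_dist G S2 \<one> (wprod ws)" using ac pc by (simp add: inv_cancel_left')
    finally have e: "word_dist G S2 a (a \<otimes> wprod ws) = word_dist G S2 \<one> (wprod ws)" .
    have "word_dist G S2 \<one> a \<le> L" using La Cons.prems by simp
    moreover have "word_dist G S2 \<one> (wprod ws) \<le> L * length ws" using Cons by simp
    ultimately have "word_dist G S2 \<one> (a \<otimes> wprod ws) \<le> L + L * length ws" using t e by linarith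
    then show ?case by simp
  qed
  obtain ws where ws: "length ws = word_dist G S1 g h" "set ws \<subseteq> sym_alph G S1" "wprod ws = inv g \<otimes> h"
    using wd_ex[OF S1 gh] by blast
  have "word_dist G S2 g h = word_dist G S2 \<one> (wprod ws)" using wd_shift[of g h S2] gh ws by simp
  also have "\<dots> \<le> L * length ws" by (rule key[OF ws(2)])
  finally show ?thesis using ws by simp
qed

end


lemma (in group) lemma3p4_aux:
  assumes "True"
    and "subgroup A G" and "subgroup B G" and "\<forall>C\<in>set Cs. subgroup C G"
    and "\<exists>g\<in>carrier G. B = (\<lambda>a. g \<otimes> a \<otimes> inv g) ` A"
    and "weakly_rel_hyperbolic G (A # B # Cs)"
  shows "weakly_rel_hyperbolic G (A # Cs)"
proof -
  obtain g where g: "g \<in> carrier G" "B = (\<lambda>a. g \<otimes> a \<otimes> inv g) ` A" using assms(5) by blast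
  obtain Y where Y: "finite Y" "rel_gen_set G Y (A # B # Cs)" "rel_cayley_hyperbolic G Y (A # B # Cs)"
    using assms(6) unfolding weakly_rel_hyperbolic_def by blast
  define So where "So = Y \<union> \<Union> (set (A # B # Cs))"
  define Y' where "Y' = insert g Y"
  define Sn where "Sn = Y' \<union> \<Union> (set (A # Cs))"
  have Ac: "A \<subseteq> carrier G" "B \<subseteq> carrier G" using assms(2,3) subgroup.subset by blast+
  have Cc: "\<Union> (set Cs) \<subseteq> carrier G" using assms(4) subgroup.subset by blast
  have Yc: "Y \<subseteq> carrier G" using Y(2) unfolding rel_gen_set_def by simp
  have Soc: "So \<subseteq> carrier G" unfolding So_def using Ac Cc Yc by auto
  have Snc: "Sn \<subseteq> carrier G" unfolding Sn_def Y'_def using Ac Cc Yc g by auto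
  have Sog: "generate G So = carrier G" using Y(2) unfolding rel_gen_set_def So_def by simp
  have sub: "So \<subseteq> generate G Sn"
  proof
    fix s assume s: "s \<in> So"
    show "s \<in> generate G Sn"
    proof (cases "s \<in> B")
      case True
      then obtain a where a: "a \<in> A" "s = g \<otimes> a \<otimes> inv g" using g by blast
      have "g \<in> generate G Sn" "a \<in> generate G Sn" using a unfolding Sn_def Y'_def by (auto intro: generate.incl)
      moreover have "inv g \<in> generate G Sn" using generate.inv[of g Sn G] unfolding Sn_def Y'_def by simp
      ultimately show ?thesis using a by (auto intro: generate.eng)
    next
      case False
      then have "s \<in> Sn" using s unfolding So_def Sn_def Y'_def by auto
      then show ?thesis by (rule generate.incl)
    qed
  qed
  have Sng: "generate G Sn = carrier G"
  proof
    show "generate G Sn \<subseteq> carrier G" using generate_incl[OF Snc] .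
    have "generate G So \<subseteq> generate G Sn"
      using generate_subgroup_incl[OF sub generate_is_subgroup[OF Snc]] .
    then show "carrier G \<subseteq> generate G Sn" using Sog by simp
  qed
  interpret go: gspace "carrier G" "word_dist G So" by (rule wd_gspace[OF Soc Sog])
  interpret gn: gspace "carrier G" "word_dist G Sn" by (rule wd_gspace[OF Snc Sng])
  define lam where "lam = max 3 (word_dist G So \<one> g)"
  have one1: "word_dist G S \<one> s \<le> 1" if "s \<in> S" "S \<subseteq> carrier G" for S s
    using wd_le[of "[s]" S \<one> s] that unfolding sym_alph_def by auto
  have c1: "word_dist G Sn x y \<le> lam * word_dist G So x y" if "x \<in> carrier G" "y \<in> carrier G" for x y
  proof -
    have "\<forall>s\<in>So. word_dist G Sn \<one> s \<le> lam"
    proof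
      fix s assume s: "s \<in> So"
      show "word_dist G Sn \<one> s \<le> lam"
      proof (cases "s \<in> B")
        case True
        then obtain a where a: "a \<in> A" "s = g \<otimes> a \<otimes> inv g" using g by blast
        have ac: "a \<in> carrier G" using a Ac by auto
        have "set [g, a, inv g] \<subseteq> sym_alph G Sn" using a unfolding sym_alph_def Sn_def Y'_def by auto
        moreover have "wprod [g, a, inv g] = inv \<one> \<otimes> s" using a ac g by (simp add: m_assoc)
        ultimately have "word_dist G Sn \<one> s \<le> 3" using wd_le by fastforce
        then show ?thesis unfolding lam_def by simp
      next
        case False
        then have "s \<in> Sn" using s unfolding So_def Sn_def Y'_def by auto
        then show ?thesis using one1[OF _ Snc] unfolding lam_def by fastforce
      qed
    qed
    then show ?thesis using wd_compare[OF Soc Sog Snc Sng _ that] by blast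
  qed
  have c2: "word_dist G So x y \<le> lam * word_dist G Sn x y" if "x \<in> carrier G" "y \<in> carrier G" for x y
  proof -
    have "\<forall>s\<in>Sn. word_dist G So \<one> s \<le> lam"
    proof
      fix s assume s: "s \<in> Sn"
      show "word_dist G So \<one> s \<le> lam"
      proof (cases "s = g")
        case True then show ?thesis unfolding lam_def by simp
      next
        case False
        then have "s \<in> So" using s unfolding So_def Sn_def Y'_def by auto
        then show ?thesis using one1[OF _ Soc] unfolding lam_def by fastforce
      qed
    qed
    then show ?thesis using wd_compare[OF Snc Sng Soc Sog _ that] by blast
  qed
  obtain \<delta> where dl: "\<delta> \<ge> 0" "\<forall>x\<in>carrier G. \<forall>y\<in>carrier G. \<forall>z\<in>carrier G. \<forall>w\<in>carrier G.
      gromov_product (\<lambda>a b. real (word_dist G So a b)) x z w \<ge>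
      min (gromov_product (\<lambda>a b. real (word_dist G So a b)) x y w) (gromov_product (\<lambda>a b. real (word_dist G So a b)) y z w) - \<delta>"
    using Y(3) unfolding rel_cayley_hyperbolic_def gromov_hyperbolic_on_def So_def by blast
  interpret ho: hspace "carrier G" "word_dist G So" \<delta>
    using dl by unfold_locales auto
  have "gromov_hyperbolic_on (carrier G) (\<lambda>a b. real (word_dist G Sn a b))"
  proof (rule ho.qi_hyp[OF wd_gspace[OF Snc Sng], of lam])
    show "1 \<le> lam" unfolding lam_def by simp
    fix x y assume "x \<in> carrier G" "y \<in> carrier G"
    then show "word_dist G So x y \<le> lam * word_dist G Sn x y \<and> word_dist G Sn x y \<le> lam * word_dist G So x y"
      using c1 c2 by blast
  qed
  then have "rel_cayley_hyperbolic G Y' (A # Cs)" unfolding rel_cayley_hyperbolic_def Sn_def .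
  moreover have "rel_gen_set G Y' (A # Cs)" unfolding rel_gen_set_def using Sng Snc unfolding Sn_def by auto
  moreover have "finite Y'" using Y(1) unfolding Y'_def by simp
  ultimately show ?thesis unfolding weakly_rel_hyperbolic_def by blast
qed

theorem lemma3p4:
  fixes G :: "('a, 'b) monoid_scheme" and A B :: "'a set" and Cs :: "'a set list"
  assumes "group G"
    and "subgroup A G" and "subgroup B G" and "\<forall>C\<in>set Cs. subgroup C G"
    and "\<exists>g\<in>carrier G. B = (\<lambda>a. g \<otimes>\<^bsub>G\<^esub> a \<otimes>\<^bsub>G\<^esub> inv\<^bsub>G\<^esub> g) ` A"
    and "weakly_rel_hyperbolic G (A # B # Cs)"
  shows "weakly_rel_hyperbolic G (A # Cs)"
  using group.lemma3p4_aux[OF assms(1) TrueI assms(2-6)] .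


end
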